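(* Let $X$ be an infinite h-homogeneous zero-dimensional compact Hausdorff space, let $\alpha=(A_1,\dots,A_n)$ be an ordered partition of $X$ into nonempty clopen sets, and let $\upsilon\in\Phi(X)$. Then $\upsilon\in\mathfrak U_\alpha$ if and only if the induced order $<_\upsilon$ on $\{A_1,\dots,A_n\}$ satisfies $A_i<_\upsilon A_j\iff i<j$. In particular $\upsilon\in\mathfrak U_{t^*_\upsilon(\alpha)}$.
   Context: h-homogeneous: every nonempty clopen subset of $X$ is homeomorphic to $X$. $\mathrm{Exp}(X)$ is the space of nonempty closed subsets of $X$ with the Vietoris topology; $\Phi(X)\subset\mathrm{Exp}(\mathrm{Exp}(X))$ is the space of maximal chains (maximal families in $\mathrm{Exp}(X)$ totally ordered by inclusion). For open sets $U_1,\dots,U_k$ of a space $Y$, $\langle U_1,\dots,U_k\rangle=\{F\in\mathrm{Exp}(Y): F\cap U_i\ne\emptyset\ \forall i,\ F\subset\bigcup_i U_i\}$. For $\alpha=(A_1,\dots,A_n)$ set $\mathcal U_j=\langle A_1,\dots,A_j\rangle\subset \mathrm{Exp}(X)$ and $\mathfrak U_\alpha=\langle\mathcal U_1,\dots,\mathcal U_n\rangle\subset\mathrm{Exp}(\mathrm{Exp}(X))$. For $\upsilon\in\Phi(X)$ and nonempty closed $D$, $D_\upsilon=\bigcap\{A\in\upsilon:A\cap D\ne\emptyset\}$; the induced order is $A_i<_\upsilon A_j$ iff $(A_i)_\upsilon\subseteq(A_j)_\upsilon$, and $t^*_\upsilon(\alpha)$ is the ordered partition listing $A_1,\dots,A_n$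 in increasing $<_\upsilon$-order. *)

theory Defs
  imports "HOL-Analysis.Analysis"
begin

definition h_homogeneous :: "'a topology \<Rightarrow> bool" where
  "h_homogeneous X \<longleftrightarrow>
     (\<forall>C. closedin X C \<and> openin X C \<and> C \<noteq> {} \<longrightarrow> subtopology X C homeomorphic_space X)"

definition Exp :: "'a topology \<Rightarrow> 'a set set" where
  "Exp X = {F. closedin X F \<and> F \<noteq> {}}"

definition vietoris :: "'a topology \<Rightarrow> 'a set topology" where
  "vietoris X = subtopology
     (topology_generated_by ({{F. F \<subseteq> U} | U. openin X U} \<union> {{F. F \<inter> U \<noteq> {}} | U. openin X U}))
     (Exp X)"

definition vbrack :: "'a topology \<Rightarrow> 'a set list \<Rightarrow> 'a set set" where
  "vbrack Y Us = {F \<in> Exp Y. (\<forall>U\<in>set Us. F \<inter> U \<noteq> {}) \<and> F \<subseteq> \<Union>(set Us)}"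

definition is_chain :: "'a set set \<Rightarrow> bool" where
  "is_chain C \<longleftrightarrow> (\<forall>A\<in>C. \<forall>B\<in>C. A \<subseteq> B \<or> B \<subseteq> A)"

definition Phi :: "'a topology \<Rightarrow> 'a set set set" where
  "Phi X = {v. v \<subseteq> Exp X \<and> is_chain v \<and>
                (\<forall>c. c \<subseteq> Exp X \<and> is_chain c \<and> v \<subseteq> c \<longrightarrow> c = v)}"

definition frakU :: "'a topology \<Rightarrow> 'a set list \<Rightarrow> 'a set set set" where
  "frakU X As = vbrack (vietoris X) (map (\<lambda>j. vbrack X (take j As)) [1..<Suc (length As)])"

definition chain_sub :: "'a set set \<Rightarrow> 'a set \<Rightarrow> 'a set" where
  "chain_sub v D = \<Inter>{A \<in> v. A \<inter> D \<noteq> {}}"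

definition t_star :: "'a set set \<Rightarrow> 'a set list \<Rightarrow> 'a set list" where
  "t_star v As = (THE Bs. mset Bs = mset As \<and>
                   sorted_wrt (\<lambda>A B. chain_sub v A \<subset> chain_sub v B) Bs)"

end

theory Submission
  imports Defs
begin

lemma chain_in_Phi:
  assumes "v \<in> Phi X" "G \<in> Exp X" "\<forall>E\<in>v. E \<subseteq> G \<or> G \<subseteq> E"
  shows "G \<in> v"
proof -
  have "insert G v \<subseteq> Exp X" "is_chain (insert G v)" "v \<subseteq> insert G v"
    using assms unfolding Phi_def is_chain_def by auto
  then have "insert G v = v" using assms(1) unfolding Phi_def by blast
  then show ?thesis by blast
qed

lemma Phi_sub: "v \<in> Phi X \<Longrightarrow> E \<in> v \<Longrightarrow> closedin X E \<and> E \<noteq> {}"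
  unfolding Phi_def Exp_def by auto

lemma Phi_chain: "v \<in> Phi X \<Longrightarrow> A \<in> v \<Longrightarrow> B \<in> v \<Longrightarrow> A \<subseteq> B \<or> B \<subseteq> A"
  unfolding Phi_def is_chain_def by auto

lemma top_in_Phi:
  assumes "v \<in> Phi X" "topspace X \<noteq> {}"
  shows "topspace X \<in> v"
  apply (rule chain_in_Phi[OF assms(1)])
  using assms Phi_sub[OF assms(1)] closedin_subset unfolding Exp_def by auto

lemma chain_sub_props:
  assumes cs: "compact_space X" and v: "v \<in> Phi X" and D: "closedin X D" "D \<noteq> {}"
  shows "chain_sub v D \<in> v" "chain_sub v D \<inter> D \<noteq> {}"
        "\<And>E. E \<in> v \<Longrightarrow> E \<inter> D \<noteq> {} \<Longrightarrow> chain_sub v D \<subseteq> E"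
proof -
  define S where "S = {A \<in> v. A \<inter> D \<noteq> {}}"
  have tsne: "topspace X \<noteq> {}" using D closedin_subset by blast
  have topS: "topspace X \<in> S" unfolding S_def using top_in_Phi[OF v tsne] D closedin_subset by blast
  have eq: "chain_sub v D = \<Inter>S" unfolding chain_sub_def S_def by simp
  have clS: "\<forall>C\<in>(\<lambda>A. A \<inter> D) ` S. closedin X C"
    using Phi_sub[OF v] D unfolding S_def by auto
  have fip: "\<forall>\<F>. finite \<F> \<and> \<F> \<subseteq> (\<lambda>A. A \<inter> D) ` S \<longrightarrow> \<Inter>\<F> \<noteq> {}"
  proof (intro allI impI)
    fix \<F> assume h: "finite \<F> \<and> \<F> \<subseteq> (\<lambda>A. A \<inter> D) ` S"
    then obtain G where G: "G \<subseteq> S" "finite G" "\<F> = (\<lambda>A. A \<inter> D) ` G"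
      by (meson finite_subset_image)
    show "\<Inter>\<F> \<noteq> {}"
    proof (cases "G = {}")
      case True then show ?thesis using G by simp
    next
      case False
      have "\<exists>m\<in>G. \<forall>g\<in>G. m \<subseteq> g" using G(2) False G(1)
      proof (induction G rule: finite_ne_induct)
        case (singleton x) then show ?case by auto
      next
        case (insert x F)
        then obtain m where m: "m \<in> F" "\<forall>g\<in>F. m \<subseteq> g" by auto
        have "x \<in> v" "m \<in> v" using insert m unfolding S_def by auto
        then have "x \<subseteq> m \<or> m \<subseteq> x" using Phi_chain[OF v] by blast
        then show ?case
        proof
          assume "x \<subseteq> m" then show ?thesis using m by (intro bexI[of _ x]) auto
        next
          assume "m \<subseteq> x" then show ?thesis using m by (intro bexI[of _ m]) auto
        qed
      qed
      then obtain m where m: "m \<in> G" "\<forall>g\<in>G. m \<subseteq> g" by blast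
      have "m \<inter> D \<subseteq> \<Inter>\<F>" using m G by auto
      moreover have "m \<inter> D \<noteq> {}" using m G unfolding S_def by auto
      ultimately show ?thesis by blast
    qed
  qed
  have ne: "\<Inter>((\<lambda>A. A \<inter> D) ` S) \<noteq> {}"
    using cs[unfolded compact_space_fip, rule_format, OF conjI[OF clS fip]] .
  have meet: "\<Inter>S \<inter> D \<noteq> {}"
  proof -
    obtain x where x: "x \<in> \<Inter>((\<lambda>A. A \<inter> D) ` S)" using ne by blast
    then have "\<forall>A\<in>S. x \<in> A \<and> x \<in> D" by blast
    then have "x \<in> \<Inter>S \<inter> D" using topS by blast
    then show ?thesis by blast
  qed
  show "\<And>E. E \<in> v \<Longrightarrow> E \<inter> D \<noteq> {} \<Longrightarrow> chain_sub v D \<subseteq> E"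
    unfolding eq S_def by auto
  show "chain_sub v D \<inter> D \<noteq> {}" using eq meet by simp
  show "chain_sub v D \<in> v"
  proof (rule chain_in_Phi[OF v])
    have "closedin X (\<Inter>S)"
      using Phi_sub[OF v] topS unfolding S_def by (intro closedin_Inter) auto
    then show "chain_sub v D \<in> Exp X" using eq meet unfolding Exp_def by auto
    show "\<forall>E\<in>v. E \<subseteq> chain_sub v D \<or> chain_sub v D \<subseteq> E"
    proof
      fix E assume E: "E \<in> v"
      show "E \<subseteq> chain_sub v D \<or> chain_sub v D \<subseteq> E"
      proof (cases "E \<inter> D = {}")
        case False then show ?thesis using E unfolding eq S_def by auto
      next
        case True
        have "\<forall>A\<in>S. E \<subseteq> A"
        proof
          fix A assume A: "A \<in> S"
          then have "A \<in> v" "A \<inter> D \<noteq> {}" unfolding S_def by auto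
          then show "E \<subseteq> A" using Phi_chain[OF v E] True by blast
        qed
        then show ?thesis unfolding eq by blast
      qed
    qed
  qed
qed

lemma chain_sub_distinct:
  assumes cs: "compact_space X" and H: "Hausdorff_space X" and v: "v \<in> Phi X"
    and A: "closedin X A" "openin X A" "A \<noteq> {}"
    and B: "closedin X B" "openin X B" "B \<noteq> {}"
    and AB: "A \<inter> B = {}"
  shows "chain_sub v A \<noteq> chain_sub v B"
proof
  assume eqAB: "chain_sub v A = chain_sub v B"
  define D where "D = chain_sub v A"
  note PA = chain_sub_props[OF cs v A(1) A(3)]
  note PB = chain_sub_props[OF cs v B(1) B(3)]
  define U where "U = \<Union>{E \<in> v. E \<subset> D}"
  define C where "C = X closure_of U"
  have Dv: "D \<in> v" using PA D_def by simp
  have Dcl: "closedin X D" using Phi_sub[OF v Dv] by simp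
  have Umiss: "U \<subseteq> topspace X - (A \<union> B)"
  proof
    fix x assume "x \<in> U"
    then obtain E where E: "E \<in> v" "E \<subset> D" "x \<in> E" unfolding U_def by auto
    have "E \<inter> A = {}" using PA(3)[OF E(1)] E(2) D_def by blast
    moreover have "E \<inter> B = {}" using PB(3)[OF E(1)] E(2) D_def eqAB by blast
    moreover have "x \<in> topspace X" using Phi_sub[OF v E(1)] closedin_subset E(3) by blast
    ultimately show "x \<in> topspace X - (A \<union> B)" using E by blast
  qed
  have "closedin X (topspace X - (A \<union> B))" using A B by blast
  then have Cmiss: "C \<subseteq> topspace X - (A \<union> B)" unfolding C_def
    using Umiss closure_of_minimal by blast
  have CD: "C \<subseteq> D" unfolding C_def
    by (rule closure_of_minimal[OF _ Dcl]) (auto simp: U_def)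
  have UC: "U \<subseteq> C" unfolding C_def
    by (rule closure_of_subset) (use Umiss in blast)
  obtain a where a: "a \<in> D" "a \<in> A" using PA(2) D_def by blast
  obtain b where b: "b \<in> D" "b \<in> B" using PB(2) D_def eqAB by blast
  define G where "G = insert a C"
  have t1: "t1_space X" using H Hausdorff_imp_t1_space by blast
  have aX: "a \<in> topspace X" using a Dcl closedin_subset by blast
  have Gcl: "closedin X G"
  proof -
    have "closedin X {a}" using closedin_t1_singleton[OF t1 aX] .
    moreover have "closedin X C" unfolding C_def by simp
    ultimately show ?thesis unfolding G_def using closedin_Un[of X "{a}" C] by simp
  qed
  have GD: "G \<subset> D" using CD a b Cmiss AB unfolding G_def by blast
  have "G \<in> v"
  proof (rule chain_in_Phi[OF v])
    show "G \<in> Exp X" using Gcl unfolding Exp_def G_def by auto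
    show "\<forall>E\<in>v. E \<subseteq> G \<or> G \<subseteq> E"
    proof
      fix E assume E: "E \<in> v"
      show "E \<subseteq> G \<or> G \<subseteq> E"
      proof (cases "D \<subseteq> E")
        case True then show ?thesis using GD by blast
      next
        case False
        then have "E \<subset> D" using Phi_chain[OF v E Dv] by blast
        then have "E \<subseteq> U" unfolding U_def using E by blast
        then show ?thesis using UC unfolding G_def by blast
      qed
    qed
  qed
  then have "G \<subseteq> U" using GD unfolding U_def by blast
  then have "a \<in> C" using UC unfolding G_def by blast
  then show False using Cmiss a by blast
qed

lemma sep_point:
  assumes cs: "compact_space X" and H: "Hausdorff_space X" and A: "closedin X A"
    and x: "x \<in> topspace X" "x \<notin> A"
  obtains U V where "openin X U" "openin X V" "x \<in> U" "A \<subseteq> V" "U \<inter> V = {}"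
proof -
  have "compactin X {x}" using x by simp
  moreover have "compactin X A" using closedin_compact_space[OF cs A] .
  moreover have "disjnt {x} A" using x by simp
  ultimately obtain U V where "openin X U" "openin X V" "{x} \<subseteq> U" "A \<subseteq> V" "disjnt U V"
    using Hausdorff_space_compact_separation[OF H] by metis
  then show ?thesis using that by (simp add: disjnt_def)
qed

lemma Phi_vietoris_closed:
  assumes cs: "compact_space X" and H: "Hausdorff_space X" and v: "v \<in> Phi X"
  shows "closedin (vietoris X) v"
proof -
  define SS where "SS = ({{F. F \<subseteq> U} | U. openin X U} \<union> {{F. F \<inter> U \<noteq> {}} | U. openin X U})"
  define T where "T = topology_generated_by SS"
  have vdef: "vietoris X = subtopology T (Exp X)" unfolding vietoris_def T_def SS_def ..
  have "Exp X \<subseteq> \<Union>SS"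
  proof
    fix F assume "F \<in> Exp X"
    then have "F \<in> {F. F \<subseteq> topspace X}" unfolding Exp_def using closedin_subset by auto
    moreover have "{F. F \<subseteq> topspace X} \<in> SS" unfolding SS_def by auto
    ultimately show "F \<in> \<Union>SS" by blast
  qed
  then have top: "topspace (vietoris X) = Exp X" unfolding vdef T_def by auto
  have vE: "v \<subseteq> Exp X" using v unfolding Phi_def by auto
  have "openin (vietoris X) (Exp X - v)"
  proof (subst openin_subopen, intro ballI)
    fix F assume F: "F \<in> Exp X - v"
    have "\<not> (\<forall>E\<in>v. E \<subseteq> F \<or> F \<subseteq> E)" using chain_in_Phi[OF v] F by blast
    then obtain A where A: "A \<in> v" "\<not> A \<subseteq> F" "\<not> F \<subseteq> A" by blast
    then obtain x y where xy: "x \<in> F" "x \<notin> A" "y \<in> A" "y \<notin> F" by blast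
    have Acl: "closedin X A" using Phi_sub[OF v A(1)] by simp
    have Fcl: "closedin X F" using F unfolding Exp_def by simp
    have xX: "x \<in> topspace X" using xy Fcl closedin_subset by blast
    have yX: "y \<in> topspace X" using xy Acl closedin_subset by blast
    obtain U1 V1 where UV1: "openin X U1" "openin X V1" "x \<in> U1" "A \<subseteq> V1" "U1 \<inter> V1 = {}"
      using sep_point[OF cs H Acl xX xy(2)] by blast
    obtain U2 V2 where UV2: "openin X U2" "openin X V2" "y \<in> U2" "F \<subseteq> V2" "U2 \<inter> V2 = {}"
      using sep_point[OF cs H Fcl yX xy(4)] by blast
    define N where "N = {G. G \<inter> U1 \<noteq> {}} \<inter> {G. G \<subseteq> V2}"
    have "openin T N" unfolding N_def T_def
      by (intro openin_Int topology_generated_by_Basis) (use UV1 UV2 in \<open>auto simp: SS_def\<close>)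
    then have op: "openin (vietoris X) (N \<inter> Exp X)" unfolding vdef
      using openin_subtopology by blast
    have FN: "F \<in> N \<inter> Exp X" using F UV1 UV2 xy unfolding N_def by blast
    have "N \<inter> v = {}"
    proof (rule ccontr)
      assume "N \<inter> v \<noteq> {}"
      then obtain G where G: "G \<in> N" "G \<in> v" by blast
      show False
      proof (cases "G \<subseteq> A")
        case True then show ?thesis using G UV1 unfolding N_def by blast
      next
        case False
        then have "A \<subseteq> G" using Phi_chain[OF v G(2) A(1)] by blast
        then show ?thesis using G UV2 xy unfolding N_def by blast
      qed
    qed
    then show "\<exists>T'. openin (vietoris X) T' \<and> F \<in> T' \<and> T' \<subseteq> Exp X - v"
      using op FN by blast
  qed
  then show ?thesis unfolding closedin_def top using vE by simp
qed

lemma vb_iff: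
  assumes "j \<le> length Bs"
  shows "F \<in> vbrack X (take j Bs) \<longleftrightarrow>
     F \<in> Exp X \<and> (\<forall>i<j. F \<inter> Bs!i \<noteq> {}) \<and> (\<forall>x\<in>F. \<exists>i<j. x \<in> Bs!i)"
proof -
  have st: "set (take j Bs) = (!) Bs ` {0..<j}" using nth_image[OF assms] by simp
  show ?thesis unfolding vbrack_def Exp_def st by (auto simp: atLeast0LessThan)
qed

lemma frak_mem:
  assumes cs: "compact_space X" and H: "Hausdorff_space X" and v: "v \<in> Phi X"
    and tsne: "topspace X \<noteq> {}"
  shows "v \<in> frakU X Bs \<longleftrightarrow>
     (\<forall>m<length Bs. \<exists>F\<in>v. F \<in> vbrack X (take (Suc m) Bs)) \<and>
     (\<forall>F\<in>v. \<exists>m<length Bs. F \<in> vbrack X (take (Suc m) Bs))"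
proof -
  have vE: "v \<in> Exp (vietoris X)" unfolding Exp_def
    using Phi_vietoris_closed[OF cs H v] top_in_Phi[OF v tsne] by auto
  define W where "W j = vbrack X (take j Bs)" for j
  have st: "set [1..<Suc (length Bs)] = Suc ` {..<length Bs}"
    by (simp only: set_upt lessThan_atLeast0 image_Suc_atLeastLessThan) simp
  have "v \<in> frakU X Bs \<longleftrightarrow> (\<forall>U\<in>W ` Suc ` {..<length Bs}. v \<inter> U \<noteq> {}) \<and> v \<subseteq> \<Union>(W ` Suc ` {..<length Bs})"
    unfolding frakU_def vbrack_def[of "vietoris X"] set_map st W_def using vE by simp
  also have "\<dots> \<longleftrightarrow> (\<forall>m<length Bs. \<exists>F\<in>v. F \<in> W (Suc m)) \<and>
     (\<forall>F\<in>v. \<exists>m<length Bs. F \<in> W (Suc m))" by blast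
  finally show ?thesis unfolding W_def .
qed


lemma frak_iff:
  assumes cs: "compact_space X" and H: "Hausdorff_space X" and v: "v \<in> Phi X"
    and tsne: "topspace X \<noteq> {}"
    and P: "\<forall>A\<in>set Bs. closedin X A \<and> openin X A \<and> A \<noteq> {}"
    and dj: "\<forall>i<length Bs. \<forall>j<length Bs. i \<noteq> j \<longrightarrow> Bs!i \<inter> Bs!j = {}"
    and cov: "\<Union>(set Bs) = topspace X"
  shows "v \<in> frakU X Bs \<longleftrightarrow> (\<forall>i<length Bs. \<forall>j<length Bs. i \<noteq> j \<longrightarrow>
              (chain_sub v (Bs!i) \<subseteq> chain_sub v (Bs!j) \<longleftrightarrow> i < j))"
proof -
  define n where "n = length Bs"
  define D where "D i = chain_sub v (Bs!i)" for i
  have Bi: "closedin X (Bs!i) \<and> openin X (Bs!i) \<and> Bs!i \<noteq> {}" if "i < n" for i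
    using P nth_mem[of i Bs] that unfolding n_def by blast
  have Dv: "D i \<in> v" if "i < n" for i
    using chain_sub_props(1)[OF cs v] Bi[OF that] unfolding D_def by blast
  have Dm: "D i \<inter> Bs!i \<noteq> {}" if "i < n" for i
    using chain_sub_props(2)[OF cs v] Bi[OF that] unfolding D_def by blast
  have Dmin: "D i \<subseteq> E" if "i < n" "E \<in> v" "E \<inter> Bs!i \<noteq> {}" for i E
    using chain_sub_props(3)[OF cs v] Bi[OF that(1)] that unfolding D_def by blast
  have Dne: "D i \<noteq> D j" if "i < n" "j < n" "i \<noteq> j" for i j
  proof -
    have "Bs!i \<inter> Bs!j = {}" using dj that unfolding n_def by blast
    then show ?thesis unfolding D_def
      using chain_sub_distinct[OF cs H v] Bi[OF that(1)] Bi[OF that(2)] by blast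
  qed
  have ch: "E \<subseteq> E' \<or> E' \<subseteq> E" if "E \<in> v" "E' \<in> v" for E E'
    using Phi_chain[OF v that] .
  have cover: "\<exists>k<n. x \<in> Bs!k" if "x \<in> topspace X" for x
  proof -
    have "x \<in> \<Union>(set Bs)" using cov that by simp
    then obtain A where A: "A \<in> set Bs" "x \<in> A" by blast
    then obtain k where "k < length Bs" "Bs!k = A" by (auto simp: in_set_conv_nth)
    then show ?thesis unfolding n_def using A by blast
  qed
  have sub: "E \<subseteq> topspace X" "E \<in> Exp X" "E \<noteq> {}" if "E \<in> v" for E
  proof -
    have "closedin X E" "E \<noteq> {}" using Phi_sub[OF v that] by auto
    then show "E \<subseteq> topspace X" "E \<in> Exp X" "E \<noteq> {}"
      using closedin_subset unfolding Exp_def by auto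
  qed
  have vb: "F \<in> vbrack X (take (Suc m) Bs) \<longleftrightarrow>
     F \<in> Exp X \<and> (\<forall>i<Suc m. F \<inter> Bs!i \<noteq> {}) \<and> (\<forall>x\<in>F. \<exists>i<Suc m. x \<in> Bs!i)"
    if "m < n" for m F
    using vb_iff[of "Suc m" Bs] that unfolding n_def by simp
  have djn: "Bs!i \<inter> Bs!j = {}" if "i < n" "j < n" "i \<noteq> j" for i j
    using dj that unfolding n_def by blast
  show ?thesis unfolding frak_mem[OF cs H v tsne] n_def[symmetric] D_def[symmetric]
  proof
    assume L: "(\<forall>m<n. \<exists>F\<in>v. F \<in> vbrack X (take (Suc m) Bs)) \<and>
     (\<forall>F\<in>v. \<exists>m<n. F \<in> vbrack X (take (Suc m) Bs))"
    have le: "D i \<subseteq> D j" if "i < j" "j < n" for i j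
    proof -
      have i: "i < n" using that by simp
      obtain F where F: "F \<in> v" "F \<in> vbrack X (take (Suc i) Bs)" using L i by blast
      then have F1: "\<forall>k<Suc i. F \<inter> Bs!k \<noteq> {}" and F2: "\<forall>x\<in>F. \<exists>k<Suc i. x \<in> Bs!k"
        using vb[OF i] by auto
      have "D i \<subseteq> F" using Dmin[OF i F(1)] F1 by blast
      have "F \<inter> Bs!j = {}"
      proof (rule ccontr)
        assume "F \<inter> Bs!j \<noteq> {}"
        then obtain x where x: "x \<in> F" "x \<in> Bs!j" by blast
        then obtain k where k: "k < Suc i" "x \<in> Bs!k" using F2 by blast
        then show False using djn[of k j] x that by auto
      qed
      then have "\<not> D j \<subseteq> F" using Dm[OF that(2)] by blast
      then have "F \<subseteq> D j" using ch[OF F(1) Dv[OF that(2)]] by blast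
      then show ?thesis using \<open>D i \<subseteq> F\<close> by blast
    qed
    show "\<forall>i<n. \<forall>j<n. i \<noteq> j \<longrightarrow> (D i \<subseteq> D j) = (i < j)"
    proof (intro allI impI)
      fix i j assume ij: "i < n" "j < n" "i \<noteq> j"
      show "(D i \<subseteq> D j) = (i < j)"
      proof (cases "i < j")
        case True then show ?thesis using le ij by blast
      next
        case False
        then have "j < i" using ij by simp
        then have "D j \<subseteq> D i" using le ij by blast
        then show ?thesis using Dne[OF ij] False by blast
      qed
    qed
  next
    assume R: "\<forall>i<n. \<forall>j<n. i \<noteq> j \<longrightarrow> (D i \<subseteq> D j) = (i < j)"
    have lt: "D i \<subseteq> D j \<and> \<not> D j \<subseteq> D i" if "i < j" "j < n" for i j
    proof -
      have i: "i < n" "i \<noteq> j" using that by auto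
      have "(D i \<subseteq> D j) = (i < j)" using R i that(2) by blast
      moreover have "(D j \<subseteq> D i) = (j < i)" using R i that(2) by blast
      ultimately show ?thesis using that by auto
    qed
    have A1: "\<forall>m<n. \<exists>F\<in>v. F \<in> vbrack X (take (Suc m) Bs)"
    proof (intro allI impI)
      fix m assume m: "m < n"
      have "D m \<in> vbrack X (take (Suc m) Bs)"
        unfolding vb[OF m]
      proof (intro conjI ballI allI impI)
        show "D m \<in> Exp X" using sub Dv m by blast
        fix k assume k: "k < Suc m"
        show "D m \<inter> Bs!k \<noteq> {}"
        proof (cases "k = m")
          case True then show ?thesis using Dm m by simp
        next
          case False
          then have "k < m" using k by simp
          then have "D k \<subseteq> D m" using lt m by blast
          then show ?thesis using Dm[of k] \<open>k < m\<close> m by auto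
        qed
      next
        fix x assume x: "x \<in> D m"
        then have "x \<in> topspace X" using sub Dv m by blast
        then obtain k where k: "k < n" "x \<in> Bs!k" using cover by blast
        have "\<not> m < k"
        proof
          assume mk: "m < k"
          have "D k \<subseteq> D m" using Dmin[OF k(1) Dv[OF m]] x k by blast
          then show False using lt[OF mk k(1)] by blast
        qed
        then show "\<exists>i<Suc m. x \<in> Bs!i" using k by (intro exI[of _ k]) auto
      qed
      then show "\<exists>F\<in>v. F \<in> vbrack X (take (Suc m) Bs)" using Dv m by blast
    qed
    have A2: "\<forall>F\<in>v. \<exists>m<n. F \<in> vbrack X (take (Suc m) Bs)"
    proof
      fix F assume F: "F \<in> v"
      define K where "K = {k. k < n \<and> F \<inter> Bs!k \<noteq> {}}"
      obtain x where x: "x \<in> F" using sub[OF F] by blast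
      then obtain k0 where k0: "k0 < n" "x \<in> Bs!k0" using cover sub[OF F] by blast
      have K0: "k0 \<in> K" unfolding K_def using k0 x by blast
      have fK: "finite K" unfolding K_def by simp
      define m where "m = Max K"
      have mK: "m \<in> K" unfolding m_def using fK K0 Max_in by blast
      have mx: "k \<le> m" if "k \<in> K" for k unfolding m_def using fK that by simp
      have m: "m < n" using mK unfolding K_def by simp
      have "F \<in> vbrack X (take (Suc m) Bs)"
        unfolding vb[OF m]
      proof (intro conjI ballI allI impI)
        show "F \<in> Exp X" using sub F by blast
        fix k assume k: "k < Suc m"
        show "F \<inter> Bs!k \<noteq> {}"
        proof (cases "k = m")
          case True then show ?thesis using mK unfolding K_def by simp
        next
          case False
          then have "k < m" using k by simp
          then have "D k \<subseteq> D m" using lt m by blast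
          moreover have "D m \<subseteq> F" using Dmin[OF m F] mK unfolding K_def by simp
          ultimately show ?thesis using Dm[of k] \<open>k < m\<close> m by auto
        qed
      next
        fix y assume y: "y \<in> F"
        then obtain k where k: "k < n" "y \<in> Bs!k" using cover sub[OF F] by blast
        then have "k \<in> K" unfolding K_def using y by blast
        then have "k \<le> m" using mx by blast
        then show "\<exists>i<Suc m. y \<in> Bs!i" using k by (intro exI[of _ k]) auto
      qed
      then show "\<exists>m<n. F \<in> vbrack X (take (Suc m) Bs)" using m by blast
    qed
    show "(\<forall>m<n. \<exists>F\<in>v. F \<in> vbrack X (take (Suc m) Bs)) \<and>
     (\<forall>F\<in>v. \<exists>m<n. F \<in> vbrack X (take (Suc m) Bs))" using A1 A2 by blast
  qed
qed


lemma sorted_unique: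
  fixes f :: "'b \<Rightarrow> 'c set"
  assumes "sorted_wrt (\<lambda>A B. f A \<subset> f B) xs" "sorted_wrt (\<lambda>A B. f A \<subset> f B) ys"
    "mset xs = mset ys"
  shows "xs = ys"
  using assms
proof (induction xs arbitrary: ys)
  case Nil then show ?case by simp
next
  case (Cons x xs)
  obtain y ys' where ys: "ys = y # ys'" using Cons.prems(3) by (cases ys) auto
  have xy: "x = y"
  proof (rule ccontr)
    assume ne: "x \<noteq> y"
    have "x \<in> set ys" using Cons.prems(3) mset_eq_setD by fastforce
    then have "x \<in> set ys'" using ne ys by simp
    then have 1: "f y \<subset> f x" using Cons.prems(2) ys by simp
    have "y \<in> set (x # xs)" using Cons.prems(3) ys mset_eq_setD by fastforce
    then have "y \<in> set xs" using ne by simp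
    then have "f x \<subset> f y" using Cons.prems(1) by simp
    then show False using 1 by blast
  qed
  have "mset xs = mset ys'" using Cons.prems(3) ys xy by simp
  then have "xs = ys'" using Cons.IH Cons.prems ys by simp
  then show ?case using xy ys by simp
qed

lemma sorted_exists:
  fixes f :: "'b \<Rightarrow> 'c set"
  assumes d: "distinct As" and inj: "inj_on f (set As)"
    and ch: "\<forall>A\<in>set As. \<forall>B\<in>set As. f A \<subseteq> f B \<or> f B \<subseteq> f A"
  shows "\<exists>Bs. mset Bs = mset As \<and> sorted_wrt (\<lambda>A B. f A \<subset> f B) Bs"
proof -
  define S where "S = set As"
  define r where "r A = card {B \<in> S. f B \<subset> f A}" for A
  define Bs where "Bs = sort_key r As"
  have ms: "mset Bs = mset As" unfolding Bs_def by simp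
  have sB: "set Bs = S" unfolding S_def using mset_eq_setD[OF ms] .
  have dB: "distinct Bs" using d mset_eq_imp_distinct_iff[OF ms] by simp
  have so: "sorted (map r Bs)" unfolding Bs_def by simp
  have key: "f A \<subset> f B" if "A \<in> S" "B \<in> S" "A \<noteq> B" "r A \<le> r B" for A B
  proof (rule ccontr)
    assume "\<not> f A \<subset> f B"
    moreover have "f A \<noteq> f B" using inj that unfolding S_def inj_on_def by blast
    ultimately have BA: "f B \<subset> f A" using ch that unfolding S_def by blast
    have fin: "finite {C \<in> S. f C \<subset> f A}" unfolding S_def by simp
    have "insert B {C \<in> S. f C \<subset> f B} \<subseteq> {C \<in> S. f C \<subset> f A}" using BA that by auto
    then have "card (insert B {C \<in> S. f C \<subset> f B}) \<le> r A" unfolding r_def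
      using card_mono fin by blast
    moreover have "card (insert B {C \<in> S. f C \<subset> f B}) = Suc (r B)" unfolding r_def S_def
      by (subst card_insert_disjoint) auto
    ultimately show False using that by simp
  qed
  have "sorted_wrt (\<lambda>A B. f A \<subset> f B) Bs"
    unfolding sorted_wrt_iff_nth_less
  proof (intro allI impI)
    fix i j assume ij: "i < j" "j < length Bs"
    have "map r Bs ! i \<le> map r Bs ! j" using sorted_nth_mono[OF so, of i j] ij by simp
    then have "r (Bs!i) \<le> r (Bs!j)" using ij by simp
    moreover have "Bs!i \<noteq> Bs!j" using dB ij by (simp add: nth_eq_iff_index_eq)
    moreover have "Bs!i \<in> S" "Bs!j \<in> S" using sB ij by auto
    ultimately show "f (Bs!i) \<subset> f (Bs!j)" using key by blast
  qed
  then show ?thesis using ms by blast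
qed


theorem lemma3p4:
  fixes X :: "'a topology" and As :: "'a set list" and v :: "'a set set"
  assumes "infinite (topspace X)"
    and "h_homogeneous X"
    and "X dim_le 0"
    and "compact_space X"
    and "Hausdorff_space X"
    and "\<forall>A\<in>set As. closedin X A \<and> openin X A \<and> A \<noteq> {}"
    and "\<forall>i<length As. \<forall>j<length As. i \<noteq> j \<longrightarrow> As ! i \<inter> As ! j = {}"
    and "\<Union>(set As) = topspace X"
    and "v \<in> Phi X"
  shows "(v \<in> frakU X As \<longleftrightarrow>
           (\<forall>i<length As. \<forall>j<length As. i \<noteq> j \<longrightarrow>
              (chain_sub v (As ! i) \<subseteq> chain_sub v (As ! j) \<longleftrightarrow> i < j)))
         \<and> v \<in> frakU X (t_star v As)"
proof -
  note cs = assms(4) and H = assms(5) and v = assms(9) and P = assms(6)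
    and dj = assms(7) and cov = assms(8)
  have tsne: "topspace X \<noteq> {}" using assms(1) by auto
  have part1: "v \<in> frakU X As \<longleftrightarrow>
           (\<forall>i<length As. \<forall>j<length As. i \<noteq> j \<longrightarrow>
              (chain_sub v (As ! i) \<subseteq> chain_sub v (As ! j) \<longleftrightarrow> i < j))"
    using frak_iff[OF cs H v tsne P dj cov] .
  have djs: "A \<inter> B = {}" if AB: "A \<in> set As" "B \<in> set As" "A \<noteq> B" for A B
  proof -
    obtain i where i: "i < length As" "As!i = A" using AB(1) by (auto simp: in_set_conv_nth)
    obtain j where j: "j < length As" "As!j = B" using AB(2) by (auto simp: in_set_conv_nth)
    have "i \<noteq> j" using i j AB(3) by blast
    then show ?thesis using dj i j by blast
  qed
  have dA: "distinct As"
    unfolding distinct_conv_nth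
  proof (intro allI impI)
    fix i j assume ij: "i < length As" "j < length As" "i \<noteq> j"
    have "As!i \<inter> As!j = {}" using dj ij by blast
    moreover have "As!i \<noteq> {}" using P ij(1) nth_mem by blast
    ultimately show "As!i \<noteq> As!j" by auto
  qed
  have inj: "inj_on (chain_sub v) (set As)"
  proof (rule inj_onI, rule ccontr)
    fix A B assume AB: "A \<in> set As" "B \<in> set As" "chain_sub v A = chain_sub v B" "A \<noteq> B"
    have "chain_sub v A \<noteq> chain_sub v B"
      using chain_sub_distinct[OF cs H v] P AB(1,2) djs[OF AB(1,2,4)] by blast
    then show False using AB(3) by simp
  qed
  have ch: "\<forall>A\<in>set As. \<forall>B\<in>set As. chain_sub v A \<subseteq> chain_sub v B \<or> chain_sub v B \<subseteq> chain_sub v A"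
  proof (intro ballI)
    fix A B assume AB: "A \<in> set As" "B \<in> set As"
    have "chain_sub v A \<in> v" using chain_sub_props(1)[OF cs v] P AB(1) by blast
    moreover have "chain_sub v B \<in> v" using chain_sub_props(1)[OF cs v] P AB(2) by blast
    ultimately show "chain_sub v A \<subseteq> chain_sub v B \<or> chain_sub v B \<subseteq> chain_sub v A"
      using Phi_chain[OF v] by blast
  qed
  obtain Bs where Bs: "mset Bs = mset As" "sorted_wrt (\<lambda>A B. chain_sub v A \<subset> chain_sub v B) Bs"
    using sorted_exists[OF dA inj ch] by blast
  have ts: "t_star v As = Bs" unfolding t_star_def
  proof (rule the_equality)
    show "mset Bs = mset As \<and> sorted_wrt (\<lambda>A B. chain_sub v A \<subset> chain_sub v B) Bs" using Bs by simp
    fix Cs assume "mset Cs = mset As \<and> sorted_wrt (\<lambda>A B. chain_sub v A \<subset> chain_sub v B) Cs"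
    then show "Cs = Bs" using sorted_unique[of "chain_sub v" Cs Bs] Bs by simp
  qed
  have sB: "set Bs = set As" using mset_eq_setD[OF Bs(1)] .
  have dB: "distinct Bs" using dA mset_eq_imp_distinct_iff[OF Bs(1)] by simp
  have PB: "\<forall>A\<in>set Bs. closedin X A \<and> openin X A \<and> A \<noteq> {}" using P sB by simp
  have djB: "\<forall>i<length Bs. \<forall>j<length Bs. i \<noteq> j \<longrightarrow> Bs ! i \<inter> Bs ! j = {}"
  proof (intro allI impI)
    fix i j assume ij: "i < length Bs" "j < length Bs" "i \<noteq> j"
    have "Bs!i \<noteq> Bs!j" using dB ij by (simp add: nth_eq_iff_index_eq)
    moreover have "Bs!i \<in> set As" "Bs!j \<in> set As" using sB ij nth_mem by blast+
    ultimately show "Bs ! i \<inter> Bs ! j = {}" using djs by blast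
  qed
  have covB: "\<Union>(set Bs) = topspace X" using cov sB by simp
  have condB: "\<forall>i<length Bs. \<forall>j<length Bs. i \<noteq> j \<longrightarrow>
              (chain_sub v (Bs ! i) \<subseteq> chain_sub v (Bs ! j) \<longleftrightarrow> i < j)"
  proof (intro allI impI)
    fix i j assume ij: "i < length Bs" "j < length Bs" "i \<noteq> j"
    have srt: "\<And>i j. i < j \<Longrightarrow> j < length Bs \<Longrightarrow> chain_sub v (Bs!i) \<subset> chain_sub v (Bs!j)"
      using Bs(2) unfolding sorted_wrt_iff_nth_less by blast
    show "(chain_sub v (Bs ! i) \<subseteq> chain_sub v (Bs ! j)) = (i < j)"
    proof (cases "i < j")
      case True then show ?thesis using srt ij by blast
    next
      case False
      then have "j < i" using ij by simp
      then show ?thesis using srt[of j i] ij False by blast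
    qed
  qed
  have part2: "v \<in> frakU X Bs" using frak_iff[OF cs H v tsne PB djB covB] condB by blast
  show ?thesis using part1 part2 ts by simp
qed

end
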